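(* Let $r\geq 3$ be an integer, let $a,b$ be rational numbers with $0<a\leq b$, and set $h:=a+(r-1)b$. If $G$ is a balanced $r$-partite graph on $rn$ vertices with $\delta^*(G)\geq (1-b/h)n$, then $G$ admits a perfect $(a,b)$-weighted fractional $K_r$-tiling.
   Context: For an $r$-partite graph $G$ with vertex classes $V_1,\dots,V_r$, $G$ is balanced if all classes have the same size, and $\delta^*(G)$ is the largest integer $m$ such that for all $i\neq j$ every vertex of $V_i$ has at least $m$ neighbours in $V_j$. A rooted copy of $K_r$ in $G$ is a copy of $K_r$ with one vertex designated as the root. For an $(a,b)$-weighted rooted copy $K$ of $K_r$, its weighted characteristic vector $\mathbf 1_{a,b,G}(K)\in\mathbb R^{V(G)}$ has entry $a$ at the root, entry $b$ at each other vertex of $K$, and $0$ elsewhere. Let $\mathcal K_{a,b,r}(G)$ be the set of all rooted copies of $K_r$ in $G$ (with this weighting). An $(a,b)$-weighted fractional $K_r$-tiling of $G$ is an assignment of weights $w(K)\geq 0$ to $K\in\mathcal K_{a,b,r}(G)$ such that $\sum_{K}w(K)\mathbf 1_{a,b,G}(K)\leq \mathbf 1$ pointwise (where $\mathbf 1$ is the all-ones vector); it is perfect if equality holds in every coordinate. *)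

theory Defs
  imports Complex_Main
begin

definition simple_graph :: "'a set \<Rightarrow> ('a \<Rightarrow> 'a \<Rightarrow> bool) \<Rightarrow> bool" where
  "simple_graph Vs E \<longleftrightarrow> finite Vs \<and> (\<forall>u v. E u v \<longrightarrow> u \<in> Vs \<and> v \<in> Vs)
     \<and> (\<forall>u v. E u v \<longrightarrow> E v u) \<and> (\<forall>u. \<not> E u u)"

definition balanced_r_partite ::
  "'a set \<Rightarrow> ('a \<Rightarrow> 'a \<Rightarrow> bool) \<Rightarrow> nat \<Rightarrow> nat \<Rightarrow> (nat \<Rightarrow> 'a set) \<Rightarrow> bool" where
  "balanced_r_partite Vs E r n P \<longleftrightarrow> simple_graph Vs E
     \<and> (\<Union>i<r. P i) = Vs
     \<and> (\<forall>i<r. \<forall>j<r. i \<noteq> j \<longrightarrow> P i \<inter> P j = {})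
     \<and> (\<forall>i<r. card (P i) = n)
     \<and> (\<forall>i<r. \<forall>u\<in>P i. \<forall>v\<in>P i. \<not> E u v)"

definition delta_star :: "('a \<Rightarrow> 'a \<Rightarrow> bool) \<Rightarrow> nat \<Rightarrow> (nat \<Rightarrow> 'a set) \<Rightarrow> nat" where
  "delta_star E r P = (GREATEST m. \<forall>i<r. \<forall>j<r. i \<noteq> j \<longrightarrow>
        (\<forall>v\<in>P i. card {u \<in> P j. E v u} \<ge> m))"

definition rooted_Kr_copies :: "'a set \<Rightarrow> ('a \<Rightarrow> 'a \<Rightarrow> bool) \<Rightarrow> nat \<Rightarrow> ('a \<times> 'a set) set" where
  "rooted_Kr_copies Vs E r = {(x, S). S \<subseteq> Vs \<and> card S = r \<and> x \<in> S
       \<and> (\<forall>u\<in>S. \<forall>v\<in>S. u \<noteq> v \<longrightarrow> E u v)}"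

definition wchar :: "real \<Rightarrow> real \<Rightarrow> 'a \<times> 'a set \<Rightarrow> 'a \<Rightarrow> real" where
  "wchar a b K v = (if v = fst K then a else if v \<in> snd K then b else 0)"

definition perfect_weighted_fractional_tiling ::
  "'a set \<Rightarrow> ('a \<Rightarrow> 'a \<Rightarrow> bool) \<Rightarrow> nat \<Rightarrow> real \<Rightarrow> real \<Rightarrow> ('a \<times> 'a set \<Rightarrow> real) \<Rightarrow> bool" where
  "perfect_weighted_fractional_tiling Vs E r a b w \<longleftrightarrow>
     (\<forall>K\<in>rooted_Kr_copies Vs E r. w K \<ge> 0)
     \<and> (\<forall>v\<in>Vs. (\<Sum>K\<in>rooted_Kr_copies Vs E r. w K * wchar a b K v) = 1)"

end

theory Submission
  imports Defs
begin


lemma farkas: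
  fixes V :: "'v set" and I :: "'i set"
  assumes "finite V" "finite I"
  shows "(\<exists>l. (\<forall>i\<in>I. 0 \<le> l i) \<and> (\<forall>v\<in>V. (\<Sum>i\<in>I. l i * A i v) = (b v::real)))
       \<or> (\<exists>y. (\<forall>i\<in>I. 0 \<le> (\<Sum>v\<in>V. y v * A i v)) \<and> (\<Sum>v\<in>V. y v * b v) < 0)"
  using assms(2)
proof (induction I arbitrary: A b rule: finite_induct)
  case empty
  show ?case
  proof (cases "\<forall>v\<in>V. b v = 0")
    case True then show ?thesis by auto
  next
    case False
    then obtain v0 where v0: "v0 \<in> V" "b v0 \<noteq> 0" by auto
    have "0 < (\<Sum>v\<in>V. b v * b v)"
      by (rule sum_pos2[OF assms(1) v0(1)]) (use v0 in \<open>auto simp: zero_less_mult_iff\<close>)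
    then have "(\<Sum>v\<in>V. (- b v) * b v) < 0" by (simp add: sum_negf)
    then show ?thesis by (intro disjI2 exI[of _ "\<lambda>v. - b v"]) simp
  qed
next
  case (insert x F)
  define d where "d w = (\<Sum>v\<in>V. w v * A x v)" for w
  show ?case
  proof (cases "\<exists>l. (\<forall>i\<in>F. 0 \<le> l i) \<and> (\<forall>v\<in>V. (\<Sum>i\<in>F. l i * A i v) = b v)")
    case True
    then obtain l where l: "\<forall>i\<in>F. 0 \<le> l i" "\<forall>v\<in>V. (\<Sum>i\<in>F. l i * A i v) = b v" by blast
    define l' where "l' = l(x := 0)"
    have "\<forall>i\<in>insert x F. 0 \<le> l' i" using l by (auto simp: l'_def)
    moreover have "\<forall>v\<in>V. (\<Sum>i\<in>insert x F. l' i * A i v) = b v"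
    proof
      fix v assume "v \<in> V"
      have "(\<Sum>i\<in>insert x F. l' i * A i v) = (\<Sum>i\<in>F. l' i * A i v)"
        using insert by (simp add: l'_def)
      also have "\<dots> = (\<Sum>i\<in>F. l i * A i v)"
        by (rule sum.cong) (use insert in \<open>auto simp: l'_def\<close>)
      finally show "(\<Sum>i\<in>insert x F. l' i * A i v) = b v" using l \<open>v\<in>V\<close> by simp
    qed
    ultimately show ?thesis by blast
  next
    case False
    with insert.IH[of A b] obtain y where
      y: "\<forall>i\<in>F. 0 \<le> (\<Sum>v\<in>V. y v * A i v)" "(\<Sum>v\<in>V. y v * b v) < 0" by blast
    define dy where "dy w = (\<Sum>v\<in>V. y v * w v)" for w
    show ?thesis
    proof (cases "0 \<le> dy (A x)")
      case True
      then show ?thesis using y insert by (auto simp: dy_def intro!: exI[of _ y])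
    next
      case False
      define \<alpha> where "\<alpha> = dy (A x)"
      have \<alpha>: "\<alpha> < 0" using False by (simp add: \<alpha>_def)
      define A' where "A' i v = dy (A i) * A x v - \<alpha> * A i v" for i v
      define b' where "b' v = dy b * A x v - \<alpha> * b v" for v
      from insert.IH[of A' b'] show ?thesis
      proof
        assume "\<exists>l. (\<forall>i\<in>F. 0 \<le> l i) \<and> (\<forall>v\<in>V. (\<Sum>i\<in>F. l i * A' i v) = b' v)"
        then obtain l where l: "\<forall>i\<in>F. 0 \<le> l i" "\<forall>v\<in>V. (\<Sum>i\<in>F. l i * A' i v) = b' v" by blast
        define c where "c = ((\<Sum>i\<in>F. l i * dy (A i)) - dy b) / (- \<alpha>)"
        have "0 \<le> (\<Sum>i\<in>F. l i * dy (A i))"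
          using l(1) y(1) by (auto intro!: sum_nonneg simp: dy_def)
        then have c0: "0 \<le> c" using y(2) \<alpha> unfolding c_def dy_def by (intro divide_nonneg_pos) auto
        define l' where "l' = l(x := c)"
        have "\<forall>i\<in>insert x F. 0 \<le> l' i" using l c0 by (auto simp: l'_def)
        moreover have "\<forall>v\<in>V. (\<Sum>i\<in>insert x F. l' i * A i v) = b v"
        proof
          fix v assume v: "v \<in> V"
          have s: "(\<Sum>i\<in>insert x F. l' i * A i v) = c * A x v + (\<Sum>i\<in>F. l i * A i v)"
          proof -
            have "(\<Sum>i\<in>insert x F. l' i * A i v) = l' x * A x v + (\<Sum>i\<in>F. l' i * A i v)"
              using insert by simp
            also have "(\<Sum>i\<in>F. l' i * A i v) = (\<Sum>i\<in>F. l i * A i v)"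
              by (rule sum.cong) (use insert in \<open>auto simp: l'_def\<close>)
            finally show ?thesis by (simp add: l'_def)
          qed
          have "(\<Sum>i\<in>F. l i * A' i v) = (\<Sum>i\<in>F. l i * dy (A i)) * A x v - \<alpha> * (\<Sum>i\<in>F. l i * A i v)"
            by (simp add: A'_def sum_distrib_left sum_distrib_right sum_subtractf algebra_simps)
          with l(2) v have "(\<Sum>i\<in>F. l i * dy (A i)) * A x v - \<alpha> * (\<Sum>i\<in>F. l i * A i v)
              = dy b * A x v - \<alpha> * b v" by (simp add: b'_def)
          then have "(\<Sum>i\<in>F. l i * A i v) = b v - c * A x v"
            using \<alpha> by (simp add: c_def field_simps)
          with s show "(\<Sum>i\<in>insert x F. l' i * A i v) = b v" by simp
        qed
        ultimately show ?thesis by blast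
      next
        assume "\<exists>y'. (\<forall>i\<in>F. 0 \<le> (\<Sum>v\<in>V. y' v * A' i v)) \<and> (\<Sum>v\<in>V. y' v * b' v) < 0"
        then obtain y' where y': "\<forall>i\<in>F. 0 \<le> (\<Sum>v\<in>V. y' v * A' i v)" "(\<Sum>v\<in>V. y' v * b' v) < 0" by blast
        define dy' where "dy' w = (\<Sum>v\<in>V. y' v * w v)" for w
        define z where "z v = dy' (A x) * y v - \<alpha> * y' v" for v
        have lin: "(\<Sum>v\<in>V. z v * w v) = dy' (A x) * dy w - \<alpha> * dy' w" for w
        proof -
          have "(\<Sum>v\<in>V. (p * y v - q * y' v) * w v) = p * (\<Sum>v\<in>V. y v * w v) - q * (\<Sum>v\<in>V. y' v * w v)" for p q
            by (simp add: sum_distrib_left sum_subtractf algebra_simps)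
          then show ?thesis by (simp add: z_def dy_def dy'_def)
        qed
        have lin2: "dy' (\<lambda>v. p * A x v - q * w v) = p * dy' (A x) - q * dy' w" for p q w
          by (simp add: dy'_def sum_distrib_left sum_subtractf algebra_simps)
        have "\<forall>i\<in>insert x F. 0 \<le> (\<Sum>v\<in>V. z v * A i v)"
        proof
          fix i assume i: "i \<in> insert x F"
          show "0 \<le> (\<Sum>v\<in>V. z v * A i v)"
          proof (cases "i = x")
            case True then show ?thesis by (simp add: lin \<alpha>_def)
          next
            case False
            then have "i \<in> F" using i by simp
            have "(\<Sum>v\<in>V. z v * A i v) = dy' (A' i)"
              unfolding lin A'_def lin2[of "dy (A i)" \<alpha> "A i"] by (simp add: algebra_simps)
            then show ?thesis using y'(1) \<open>i\<in>F\<close> by (simp add: dy'_def)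
          qed
        qed
        moreover have "(\<Sum>v\<in>V. z v * b v) < 0"
        proof -
          have "(\<Sum>v\<in>V. z v * b v) = dy' b'"
            unfolding lin b'_def lin2[of "dy b" \<alpha> b] by (simp add: algebra_simps)
          then show ?thesis using y'(2) by (simp add: dy'_def)
        qed
        ultimately show ?thesis by blast
      qed
    qed
  qed
qed



lemma min_le_avg:
  fixes f :: "'b \<Rightarrow> real"
  assumes "finite S" "S \<noteq> {}"
  shows "\<exists>x\<in>S. real (card S) * f x \<le> sum f S"
proof (rule ccontr)
  assume "\<not> ?thesis"
  then have "\<forall>x\<in>S. sum f S < real (card S) * f x" by auto
  then have "(\<Sum>x\<in>S. sum f S) < (\<Sum>x\<in>S. real (card S) * f x)"
    using assms by (intro sum_strict_mono) auto
  then show False by (simp add: sum_distrib_left)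
qed

lemma sum_div_block:
  fixes f :: "nat \<Rightarrow> real"
  shows "(\<Sum>k<n*q. f (k div q)) = real q * (\<Sum>k<n. f k)"
proof (induction n)
  case 0 then show ?case by simp
next
  case (Suc n)
  have "(\<Sum>k<Suc n*q. f (k div q)) = (\<Sum>k\<in>{0..<n*q}. f (k div q)) + (\<Sum>k\<in>{n*q..<n*q+q}. f (k div q))"
    by (subst sum.atLeastLessThan_concat) (auto simp: lessThan_atLeast0 add.commute)
  also have "(\<Sum>k\<in>{n*q..<n*q+q}. f (k div q)) = (\<Sum>k\<in>{n*q..<n*q+q}. f n)"
  proof (rule sum.cong)
    fix k assume k: "k \<in> {n*q..<n*q+q}"
    then have "q > 0" by auto
    then have "k div q = n" using k
      by (metis atLeastLessThan_iff add.commute div_nat_eqI mult.commute mult_Suc)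
    then show "f (k div q) = f n" by simp
  qed simp
  finally show ?case using Suc by (simp add: lessThan_atLeast0 algebra_simps)
qed

lemma mod_cancel_left_nat: "(t + s) mod r = (t + s') mod (r::nat) \<Longrightarrow> s mod r = s' mod r"
  by (simp add: nat_mod_eq_iff)

lemma rot_bij: "r > 0 \<Longrightarrow> bij_betw (\<lambda>s. (t + s) mod r) {..<(r::nat)} {..<r}"
proof -
  assume r: "r > 0"
  have inj: "inj_on (\<lambda>s. (t + s) mod r) {..<r}"
  proof
    fix s s' assume s: "s \<in> {..<r}" "s' \<in> {..<r}" and e: "(t + s) mod r = (t + s') mod r"
    have "s mod r = s' mod r"
      using e by (rule mod_cancel_left_nat)
    then show "s = s'" using s by simp
  qed
  moreover have "(\<lambda>s. (t + s) mod r) ` {..<r} \<subseteq> {..<r}" using r by auto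
  ultimately show ?thesis
    by (simp add: bij_betw_def endo_inj_surj)
qed

lemma rot_sum: "r > 0 \<Longrightarrow> (\<Sum>s<r. g ((t + s) mod r)) = (\<Sum>j<(r::nat). g j)"
  using sum.reindex_bij_betw[OF rot_bij] by blast



lemma greedy:
  fixes P :: "nat \<Rightarrow> 'a set" and c :: "nat \<Rightarrow> nat" and y :: "'a \<Rightarrow> real"
  assumes deg: "\<And>i j v. i < r \<Longrightarrow> j < r \<Longrightarrow> i \<noteq> j \<Longrightarrow> v \<in> P i \<Longrightarrow> card {u\<in>P j. \<not> E v u} \<le> m"
    and cr: "\<And>t. t < r \<Longrightarrow> c t < r" and cinj: "inj_on c {..<r}"
    and fin: "\<And>i. i < r \<Longrightarrow> finite (P i)"
    and tgt: "\<And>t. t < r \<Longrightarrow> t * m < card {z\<in>P (c t). y z \<le> y (x t)}"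
  shows "k \<le> r \<Longrightarrow> \<exists>v. \<forall>t<k. v t \<in> P (c t) \<and> y (v t) \<le> y (x t) \<and> (\<forall>s<t. E (v s) (v t))"
proof (induction k)
  case 0 then show ?case by simp
next
  case (Suc k)
  then obtain v where v: "\<forall>t<k. v t \<in> P (c t) \<and> y (v t) \<le> y (x t) \<and> (\<forall>s<t. E (v s) (v t))" by auto
  have kr: "k < r" using Suc by simp
  define C where "C = {z\<in>P (c k). \<forall>s<k. E (v s) z}"
  define D where "D = {z\<in>P (c k). y z \<le> y (x k)}"
  have "P (c k) - C = (\<Union>s<k. {u\<in>P (c k). \<not> E (v s) u})" by (auto simp: C_def)
  then have "card (P (c k) - C) \<le> (\<Sum>s<k. card {u\<in>P (c k). \<not> E (v s) u})"
    by (simp add: card_UN_le)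
  also have "\<dots> \<le> (\<Sum>s<k. m)"
  proof (rule sum_mono)
    fix s assume s: "s \<in> {..<k}"
    have "c s \<noteq> c k" using cinj s kr by (auto dest: inj_onD)
    then show "card {u\<in>P (c k). \<not> E (v s) u} \<le> m"
      using deg[of "c s" "c k" "v s"] cr s kr v by auto
  qed
  finally have "card (P (c k) - C) \<le> k * m" by simp
  also have "\<dots> < card D" using tgt[OF kr] by (simp add: D_def)
  finally have "\<not> D \<subseteq> P (c k) - C"
    using fin[of "c k"] cr[OF kr] by (meson card_mono finite_Diff leD)
  then obtain z where z: "z \<in> D" "z \<in> C" by (auto simp: D_def)
  define v' where "v' = v(k := z)"
  have "\<forall>t<Suc k. v' t \<in> P (c t) \<and> y (v' t) \<le> y (x t) \<and> (\<forall>s<t. E (v' s) (v' t))"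
    using v z by (auto simp: v'_def C_def D_def less_Suc_eq)
  then show ?case by blast
qed



lemma blocks_sum:
  fixes f :: "nat \<Rightarrow> real"
  shows "(\<Sum>t<K. \<Sum>k\<in>{t*L..<Suc t*L}. f k) = (\<Sum>k<K*L. f k)"
proof (induction K)
  case 0 then show ?case by simp
next
  case (Suc K)
  have "(\<Sum>k<Suc K*L. f k) = (\<Sum>k\<in>{0..<K*L}. f k) + (\<Sum>k\<in>{K*L..<Suc K*L}. f k)"
    by (subst sum.atLeastLessThan_concat) (auto simp: lessThan_atLeast0)
  then show ?case using Suc by (simp add: lessThan_atLeast0)
qed

lemma sum_list_nth:
  assumes "distinct xs"
  shows "sum g (set xs) = (\<Sum>k<length xs. g (xs ! k))"
proof -
  have "set xs = (!) xs ` {..<length xs}" by (auto simp: set_conv_nth)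
  then show ?thesis using inj_on_nth[OF assms, of "{..<length xs}"]
    by (simp add: sum.reindex)
qed

lemma dual:
  fixes Vs :: "'a set" and E :: "'a \<Rightarrow> 'a \<Rightarrow> bool" and r n :: nat and P :: "nat \<Rightarrow> 'a set"
    and a b :: real and y :: "'a \<Rightarrow> real" and p q m :: nat
  assumes r2: "r \<ge> 2" and n0: "n > 0" and bal: "balanced_r_partite Vs E r n P"
    and deg: "\<And>i j v. i<r \<Longrightarrow> j<r \<Longrightarrow> i\<noteq>j \<Longrightarrow> v\<in>P i \<Longrightarrow> card {u\<in>P j. \<not> E v u} \<le> m"
    and a0: "0 < a" and ab: "a \<le> b"
    and pq: "real p * (a + (real r - 1) * b) = b * real q"
    and p0: "p > 0" and qp: "(r-1)*p < q"
    and mq: "m * q \<le> p * n"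
  shows "\<exists>K\<in>rooted_Kr_copies Vs E r. (\<Sum>v\<in>Vs. y v * wchar a b K v)
            \<le> (a + (real r - 1) * b) / (real r * real n) * (\<Sum>v\<in>Vs. y v)"
proof -
  define h where "h = a + (real r - 1) * b"
  have sg: "simple_graph Vs E" and un: "(\<Union>i<r. P i) = Vs"
    and dj: "\<forall>i<r. \<forall>j<r. i \<noteq> j \<longrightarrow> P i \<inter> P j = {}"
    and cardP: "\<forall>i<r. card (P i) = n"
    using bal unfolding balanced_r_partite_def by auto
  have finV: "finite Vs" and Esym: "\<And>u v. E u v \<Longrightarrow> E v u"
    using sg unfolding simple_graph_def by auto
  have PV: "\<And>i. i < r \<Longrightarrow> P i \<subseteq> Vs" using un by auto
  have finP: "\<And>i. i < r \<Longrightarrow> finite (P i)" using PV finV finite_subset by blast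
  have q0: "q > 0" using qp by simp
  have "\<forall>j. \<exists>l. j < r \<longrightarrow> distinct l \<and> set l = P j \<and> sorted (map y l)"
  proof
    fix j show "\<exists>l. j < r \<longrightarrow> distinct l \<and> set l = P j \<and> sorted (map y l)"
    proof (cases "j < r")
      case True
      then obtain l0 where "distinct l0" "set l0 = P j" using finP finite_distinct_list by blast
      then show ?thesis by (intro exI[of _ "sort_key y l0"]) auto
    qed simp
  qed
  then obtain xs where xs: "\<And>j. j < r \<Longrightarrow> distinct (xs j) \<and> set (xs j) = P j \<and> sorted (map y (xs j))"
    using choice[of "\<lambda>j l. j < r \<longrightarrow> distinct l \<and> set l = P j \<and> sorted (map y l)"] by blast
  have len: "\<And>j. j < r \<Longrightarrow> length (xs j) = n"
    using xs cardP by (metis distinct_card)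
  define L where "L = p * n"
  define N where "N = n * q"
  have L0: "L > 0" using p0 n0 by (simp add: L_def)
  have LN: "(r-1) * L < N" using qp n0 by (simp add: L_def N_def)
  define band where "band t = (if t < r - 1 then {t*L..<Suc t*L} else {(r-1)*L..<N})" for t
  have band_lo: "\<And>k t. t < r \<Longrightarrow> k \<in> band t \<Longrightarrow> t * L \<le> k"
  proof -
    fix k t assume t: "t < r" and k: "k \<in> band t"
    show "t * L \<le> k"
    proof (cases "t < r - 1")
      case False
      then have "t = r - 1" using t by arith
      then show ?thesis using k by (simp add: band_def)
    qed (use k in \<open>auto simp: band_def\<close>)
  qed
  have band_sub: "\<And>t. t < r \<Longrightarrow> band t \<subseteq> {..<N}"
  proof -
    fix t assume t: "t < r"
    show "band t \<subseteq> {..<N}"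
    proof (cases "t < r - 1")
      case True
      then have "Suc t * L \<le> (r-1) * L" by (intro mult_le_mono1) simp
      then show ?thesis using True LN by (auto simp: band_def)
    qed (auto simp: band_def)
  qed
  have band_ne: "\<And>t. t < r \<Longrightarrow> band t \<noteq> {}"
    using L0 LN by (auto simp: band_def)
  have band_fin: "\<And>t. finite (band t)" by (simp add: band_def)
  define coef where "coef t = (if t < r - 1 then b else a)" for t
  define \<kappa> where "\<kappa> = h / (real n * real q)"
  have hpos: "h > 0" using a0 ab r2 by (simp add: h_def add_pos_nonneg)
  have \<kappa>0: "\<kappa> \<ge> 0" using hpos by (simp add: \<kappa>_def)
  have coef_eq: "\<And>t. t < r \<Longrightarrow> coef t = \<kappa> * real (card (band t))"
  proof -
    fix t assume t: "t < r"
    show "coef t = \<kappa> * real (card (band t))"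
    proof (cases "t < r - 1")
      case True
      then have "card (band t) = p * n" by (simp add: band_def L_def)
      then show ?thesis using True pq n0 q0
        by (simp add: coef_def \<kappa>_def h_def field_simps)
    next
      case False
      then have "card (band t) = n * q - (r-1) * (p * n)" by (simp add: band_def L_def N_def)
      moreover have "real (n * q - (r-1) * (p * n)) = real n * real q - (real r - 1) * real p * real n"
        using LN r2 by (simp add: L_def N_def of_nat_diff algebra_simps)
      ultimately have cb: "real (card (band t)) = real n * real q - (real r - 1) * real p * real n" by simp
      have ph: "real p * h = b * real q" using pq by (simp add: h_def)
      have "\<kappa> * real (card (band t)) = h - (real r - 1) * (real p * h) / real q"
        unfolding cb \<kappa>_def using n0 q0 by (simp add: field_simps)
      also have "\<dots> = a" unfolding ph using q0 by (simp add: h_def)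
      finally show ?thesis using False by (simp add: coef_def)
    qed
  qed
  define F where "F j k = y (xs j ! (k div q))" for j k
  have ex_qs: "\<And>j t. t < r \<Longrightarrow> \<exists>k. k \<in> band t \<and> real (card (band t)) * F j k \<le> sum (F j) (band t)"
  proof -
    fix j t assume t: "t < r"
    show "\<exists>k. k \<in> band t \<and> real (card (band t)) * F j k \<le> sum (F j) (band t)"
      using min_le_avg[OF band_fin band_ne[OF t], of "F j"] by blast
  qed
  define qs where "qs j t = (SOME k. k \<in> band t \<and> real (card (band t)) * F j k \<le> sum (F j) (band t))" for j t
  have qs: "\<And>j t. t < r \<Longrightarrow> qs j t \<in> band t \<and> real (card (band t)) * F j (qs j t) \<le> sum (F j) (band t)"
    unfolding qs_def by (rule someI_ex, rule ex_qs)
  have term_bound: "\<And>j t. t < r \<Longrightarrow> coef t * F j (qs j t) \<le> \<kappa> * sum (F j) (band t)"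
  proof -
    fix j t assume t: "t < r"
    have "coef t * F j (qs j t) = \<kappa> * (real (card (band t)) * F j (qs j t))"
      using coef_eq[OF t] by simp
    also have "\<dots> \<le> \<kappa> * sum (F j) (band t)"
      using qs[OF t] \<kappa>0 by (intro mult_left_mono) auto
    finally show "coef t * F j (qs j t) \<le> \<kappa> * sum (F j) (band t)" .
  qed
  define cls where "cls s t = (t + s) mod r" for s t
  define R where "R s = (\<Sum>t<r. coef t * F (cls s t) (qs (cls s t) t))" for s
  have r0: "r > 0" using r2 by simp
  have band_union: "\<And>f::nat\<Rightarrow>real. (\<Sum>t<r. sum f (band t)) = (\<Sum>k<N. f k)"
  proof -
    fix f :: "nat \<Rightarrow> real"
    have rr: "{..<r} = insert (r-1) {..<r-1}" using r0 by auto
    have d: "(\<Sum>t<r. sum f (band t)) = sum f (band (r-1)) + (\<Sum>t<r-1. sum f (band t))"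
      by (subst rr) simp
    have "(\<Sum>t<r-1. sum f (band t)) = (\<Sum>t<r-1. \<Sum>k\<in>{t*L..<Suc t*L}. f k)"
      by (rule sum.cong) (auto simp: band_def)
    also have "\<dots> = (\<Sum>k<(r-1)*L. f k)" by (rule blocks_sum)
    finally have b1: "(\<Sum>t<r-1. sum f (band t)) = (\<Sum>k\<in>{0..<(r-1)*L}. f k)" by (simp add: lessThan_atLeast0)
    have b2: "sum f (band (r-1)) = (\<Sum>k\<in>{(r-1)*L..<N}. f k)" by (simp add: band_def)
    show "(\<Sum>t<r. sum f (band t)) = (\<Sum>k<N. f k)"
      unfolding d b1 b2 using sum.atLeastLessThan_concat[of 0 "(r-1)*L" N f] LN by (simp add: lessThan_atLeast0)
  qed
  have sumP: "\<And>j. j < r \<Longrightarrow> (\<Sum>k<N. F j k) = real q * sum y (P j)"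
  proof -
    fix j assume j: "j < r"
    have "(\<Sum>k<N. F j k) = real q * (\<Sum>k<n. y (xs j ! k))"
      unfolding F_def N_def by (rule sum_div_block)
    also have "(\<Sum>k<n. y (xs j ! k)) = sum y (P j)"
      using sum_list_nth[of "xs j" y] xs[OF j] len[OF j] by simp
    finally show "(\<Sum>k<N. F j k) = real q * sum y (P j)" .
  qed
  have sumV: "sum y Vs = (\<Sum>j<r. sum y (P j))"
    unfolding un[symmetric] using finP dj by (subst sum.UNION_disjoint) auto
  have "(\<Sum>s<r. R s) \<le> (\<Sum>s<r. \<Sum>t<r. \<kappa> * sum (F (cls s t)) (band t))"
    unfolding R_def
  proof (intro sum_mono)
    fix s t assume "s \<in> {..<r}" "t \<in> {..<r}"
    then show "coef t * F (cls s t) (qs (cls s t) t) \<le> \<kappa> * sum (F (cls s t)) (band t)"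
      using term_bound by simp
  qed
  also have "\<dots> = \<kappa> * (\<Sum>s<r. \<Sum>t<r. sum (F (cls s t)) (band t))"
    by (simp add: sum_distrib_left)
  also have "(\<Sum>s<r. \<Sum>t<r. sum (F (cls s t)) (band t)) = real q * sum y Vs"
  proof -
    have "(\<Sum>s<r. \<Sum>t<r. sum (F (cls s t)) (band t)) = (\<Sum>t<r. \<Sum>s<r. sum (F ((t + s) mod r)) (band t))"
      unfolding cls_def by (rule sum.swap)
    also have "\<dots> = (\<Sum>t<r. \<Sum>j<r. sum (F j) (band t))"
    proof (rule sum.cong[OF refl])
      fix t show "(\<Sum>s<r. sum (F ((t + s) mod r)) (band t)) = (\<Sum>j<r. sum (F j) (band t))"
        using rot_sum[OF r0, of "\<lambda>j. sum (F j) (band t)" t] by simp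
    qed
    also have "\<dots> = (\<Sum>j<r. \<Sum>t<r. sum (F j) (band t))" by (rule sum.swap)
    also have "\<dots> = (\<Sum>j<r. real q * sum y (P j))"
      using band_union sumP by simp
    also have "\<dots> = real q * sum y Vs" by (simp add: sumV sum_distrib_left)
    finally show ?thesis .
  qed
  finally have sumR: "(\<Sum>s<r. R s) \<le> \<kappa> * (real q * sum y Vs)" .
  obtain \<sigma> where \<sigma>: "\<sigma> \<in> {..<r}" "real (card {..<r}) * R \<sigma> \<le> sum R {..<r}"
    using min_le_avg[of "{..<r}" R] r0 by auto
  have Rs: "R \<sigma> \<le> h / (real r * real n) * sum y Vs"
  proof -
    have "real r * R \<sigma> \<le> \<kappa> * (real q * sum y Vs)" using \<sigma> sumR by simp
    then have "R \<sigma> \<le> \<kappa> * (real q * sum y Vs) / real r" using r0 by (simp add: field_simps)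
    also have "\<kappa> * (real q * sum y Vs) / real r = h / (real r * real n) * sum y Vs"
      using q0 n0 by (simp add: \<kappa>_def field_simps)
    finally show ?thesis .
  qed
  define c where "c t = cls \<sigma> t" for t
  define x where "x t = xs (c t) ! (qs (c t) t div q)" for t
  have cr: "\<And>t. t < r \<Longrightarrow> c t < r" using r0 by (simp add: c_def cls_def)
  have cinj: "inj_on c {..<r}"
  proof -
    have "inj_on (\<lambda>t. (\<sigma> + t) mod r) {..<r}" using rot_bij[OF r0] bij_betw_def by blast
    moreover have "c = (\<lambda>t. (\<sigma> + t) mod r)" by (simp add: c_def cls_def add.commute fun_eq_iff)
    ultimately show ?thesis by simp
  qed
  have tgt: "\<And>t. t < r \<Longrightarrow> t * m < card {z\<in>P (c t). y z \<le> y (x t)}"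
  proof -
    fix t assume t: "t < r"
    define j where "j = c t"
    define i where "i = qs j t div q"
    have j: "j < r" using cr t by (simp add: j_def)
    have qsb: "qs j t \<in> band t" using qs[OF t] by simp
    then have "qs j t < N" using band_sub[OF t] by auto
    then have "i < n" by (simp add: i_def N_def div_less_iff_less_mult q0)
    have "t * m * q \<le> t * L" using mq by (simp add: L_def mult.assoc mult_le_mono2 mult.commute)
    also have "\<dots> \<le> qs j t" using band_lo[OF t qsb] .
    also have "qs j t < Suc i * q" using div_less_iff_less_mult[OF q0, of "qs j t" "Suc i"] by (simp add: i_def)
    finally have "t * m * q < Suc i * q" .
    then have tm: "t * m < Suc i" using mult_less_cancel2 by blast
    have sub: "(!) (xs j) ` {..i} \<subseteq> {z\<in>P (c t). y z \<le> y (x t)}"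
    proof
      fix z assume "z \<in> (!) (xs j) ` {..i}"
      then obtain k where k: "k \<le> i" "z = xs j ! k" by auto
      have "k < length (xs j)" using k \<open>i < n\<close> len[OF j] by simp
      then have "z \<in> set (xs j)" using k by simp
      then have "z \<in> P j" using xs[OF j] by simp
      moreover have "y z \<le> y (x t)"
        using sorted_nth_mono[of "map y (xs j)" k i] xs[OF j] len[OF j] k \<open>i<n\<close>
        by (simp add: x_def j_def[symmetric] i_def[symmetric])
      ultimately show "z \<in> {z\<in>P (c t). y z \<le> y (x t)}" by (simp add: j_def)
    qed
    have "card ((!) (xs j) ` {..i}) = Suc i"
      using inj_on_nth[of "xs j" "{..i}"] xs[OF j] len[OF j] \<open>i<n\<close> by (simp add: card_image)
    then have "Suc i \<le> card {z\<in>P (c t). y z \<le> y (x t)}"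
    proof -
      have "finite {z\<in>P (c t). y z \<le> y (x t)}" using finP[OF j] by (simp add: j_def)
      from card_mono[OF this sub] show ?thesis using \<open>card ((!) (xs j) ` {..i}) = Suc i\<close> by simp
    qed
    then show "t * m < card {z\<in>P (c t). y z \<le> y (x t)}" using tm by simp
  qed
  have "\<exists>v. \<forall>t<r. v t \<in> P (c t) \<and> y (v t) \<le> y (x t) \<and> (\<forall>s<t. E (v s) (v t))"
    apply (rule greedy[where r=r and m=m and E=E and P=P and c=c and y=y and x=x and k=r])
    using deg cr cinj finP tgt by auto
  then obtain v where v: "\<forall>t<r. v t \<in> P (c t) \<and> y (v t) \<le> y (x t) \<and> (\<forall>s<t. E (v s) (v t))"
    by blast
  define S where "S = v ` {..<r}"
  define K where "K = (v (r-1), S)"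
  have vinj: "inj_on v {..<r}"
  proof
    fix s t assume st: "s \<in> {..<r}" "t \<in> {..<r}" "v s = v t"
    show "s = t"
    proof (rule ccontr)
      assume "s \<noteq> t"
      then have "c s \<noteq> c t" using cinj st by (auto dest: inj_onD)
      then show False using dj cr st v by (metis disjoint_iff lessThan_iff)
    qed
  qed
  have SV: "S \<subseteq> Vs" using v PV cr by (auto simp: S_def)
  have cardS: "card S = r" using vinj by (simp add: S_def card_image)
  have clique: "\<forall>u\<in>S. \<forall>w\<in>S. u \<noteq> w \<longrightarrow> E u w"
  proof (intro ballI impI)
    fix u w assume "u \<in> S" "w \<in> S" "u \<noteq> w"
    then obtain s t where st: "s < r" "t < r" "u = v s" "w = v t" "s \<noteq> t" by (auto simp: S_def)
    show "E u w"
    proof (cases "s < t")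
      case True then show ?thesis using v st by auto
    next
      case False then have "t < s" using st by simp
      then show ?thesis using v st Esym by auto
    qed
  qed
  have Kin: "K \<in> rooted_Kr_copies Vs E r"
    using SV cardS clique r0 by (auto simp: rooted_Kr_copies_def K_def S_def)
  have "(\<Sum>u\<in>Vs. y u * wchar a b K u) = (\<Sum>u\<in>S. y u * wchar a b K u)"
  proof (rule sum.mono_neutral_right[OF finV SV])
    show "\<forall>i\<in>Vs - S. y i * wchar a b K i = 0"
      using r0 by (auto simp: wchar_def K_def S_def)
  qed
  also have "\<dots> = (\<Sum>t<r. y (v t) * wchar a b K (v t))"
    unfolding S_def using vinj by (simp add: sum.reindex)
  also have "\<dots> = (\<Sum>t<r. coef t * y (v t))"
  proof (rule sum.cong)
    fix t assume t: "t \<in> {..<r}"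
    have "(v t = v (r-1)) = (t = r - 1)" using vinj t r0 by (auto dest: inj_onD)
    then show "y (v t) * wchar a b K (v t) = coef t * y (v t)"
      using t by (auto simp: wchar_def K_def S_def coef_def)
  qed simp
  also have "\<dots> \<le> (\<Sum>t<r. coef t * y (x t))"
  proof (rule sum_mono)
    fix t assume "t \<in> {..<r}"
    moreover have "coef t \<ge> 0" using a0 ab by (simp add: coef_def)
    ultimately show "coef t * y (v t) \<le> coef t * y (x t)" using v by (simp add: mult_left_mono)
  qed
  also have "\<dots> = R \<sigma>" by (simp add: R_def x_def F_def c_def)
  also note Rs
  finally show ?thesis using Kin by (auto simp: h_def)
qed


theorem lemma2p2:
  fixes Vs :: "'a set" and E :: "'a \<Rightarrow> 'a \<Rightarrow> bool" and r n :: nat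
    and P :: "nat \<Rightarrow> 'a set" and a b :: real
  assumes "r \<ge> 3"
    and "a \<in> \<rat>" and "b \<in> \<rat>" and "0 < a" and "a \<le> b"
    and "balanced_r_partite Vs E r n P"
    and "real (delta_star E r P) \<ge> (1 - b / (a + (real r - 1) * b)) * real n"
  shows "\<exists>w. perfect_weighted_fractional_tiling Vs E r a b w"
proof -
  note r3 = assms(1) and aQ = assms(2) and bQ = assms(3) and a0 = assms(4) and ab = assms(5)
    and bal = assms(6) and dlt = assms(7)
  define h where "h = a + (real r - 1) * b"
  have hpos: "h > 0" using a0 ab r3 by (simp add: h_def add_pos_nonneg)
  have sg: "simple_graph Vs E" and un: "(\<Union>i<r. P i) = Vs"
    and cardP: "\<forall>i<r. card (P i) = n"
    using bal unfolding balanced_r_partite_def by auto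
  have finV: "finite Vs" using sg unfolding simple_graph_def by auto
  have PV: "\<And>i. i < r \<Longrightarrow> P i \<subseteq> Vs" using un by auto
  have finP: "\<And>i. i < r \<Longrightarrow> finite (P i)" using PV finV finite_subset by blast
  define I where "I = rooted_Kr_copies Vs E r"
  have finI: "finite I"
  proof -
    have "I \<subseteq> Vs \<times> Pow Vs" by (auto simp: I_def rooted_Kr_copies_def)
    then show ?thesis using finV finite_subset by blast
  qed
  show ?thesis
  proof (cases "n = 0")
    case True
    then have "\<And>i. i < r \<Longrightarrow> P i = {}" using cardP finP by auto
    then have "Vs = {}" using un by auto
    then show ?thesis unfolding perfect_weighted_fractional_tiling_def
      by (intro exI[of _ "\<lambda>_. 0"]) simp
  next
    case False
    then have n0: "n > 0" by simp
    have hQ: "h \<in> \<rat>" using aQ bQ by (simp add: h_def)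
    have "b / h \<in> \<rat>" using hQ bQ by simp
    then obtain a' b' :: int where ab': "0 < b'" "b / h = of_int a' / of_int b'"
      by (rule Rats_cases') blast
    have "b / h > 0" using a0 ab hpos by simp
    then have a'0: "a' > 0" using ab' by (simp add: zero_less_divide_iff)
    define p where "p = nat a'"
    define q where "q = nat b'"
    have pr: "real p = of_int a'" using a'0 by (simp add: p_def)
    have qr: "real q = of_int b'" using ab' by (simp add: q_def)
    have p0: "p > 0" using a'0 by (simp add: p_def)
    have q0: "q > 0" using ab' by (simp add: q_def)
    have bhpq: "b / h = real p / real q" using ab' pr qr by simp
    have pq: "real p * h = b * real q" using bhpq hpos q0 by (simp add: field_simps)
    have qp: "(r-1) * p < q"
    proof -
      have "(real r - 1) * b < h" using a0 by (simp add: h_def)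
      then have "(real r - 1) * b * real q < h * real q" using q0 by simp
      also have "(real r - 1) * b * real q = (real r - 1) * real p * h" using pq by (simp add: algebra_simps)
      finally have "(real r - 1) * real p < real q" using hpos by simp
      moreover have "real ((r-1) * p) = (real r - 1) * real p" using r3 by (simp add: of_nat_diff)
      ultimately show ?thesis by linarith
    qed
    define \<delta> where "\<delta> = delta_star E r P"
    define Q where "Q = (\<lambda>m. \<forall>i<r. \<forall>j<r. i \<noteq> j \<longrightarrow> (\<forall>v\<in>P i. card {u \<in> P j. E v u} \<ge> m))"
    have "Q \<delta>"
      unfolding \<delta>_def delta_star_def Q_def[symmetric]
    proof (rule GreatestI_nat[where k=0 and b=n])
      show "Q 0" by (simp add: Q_def)
    next
      fix m assume Qm: "Q m"
      have "P 0 \<noteq> {}" using cardP n0 r3 by (metis card.empty less_le_trans not_less_zero numeral_3_eq_3 zero_less_Suc neq0_conv)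
      then obtain v0 where v0: "v0 \<in> P 0" by auto
      have "m \<le> card {u \<in> P 1. E v0 u}" 
        using Qm[unfolded Q_def, rule_format, of 0 1 v0] v0 r3 by simp
      also have "\<dots> \<le> card (P 1)" using finP[of 1] r3 by (intro card_mono) auto
      also have "\<dots> = n" using cardP r3 by simp
      finally show "m \<le> n" .
    qed
    then have degE: "\<And>i j v. i<r \<Longrightarrow> j<r \<Longrightarrow> i\<noteq>j \<Longrightarrow> v\<in>P i \<Longrightarrow> \<delta> \<le> card {u\<in>P j. E v u}"
      by (simp add: Q_def)
    define m where "m = n - \<delta>"
    have deg: "\<And>i j v. i<r \<Longrightarrow> j<r \<Longrightarrow> i\<noteq>j \<Longrightarrow> v\<in>P i \<Longrightarrow> card {u\<in>P j. \<not> E v u} \<le> m"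
    proof -
      fix i j v assume ij: "i<r" "j<r" "i\<noteq>j" "v\<in>P i"
      have "{u\<in>P j. \<not> E v u} = P j - {u\<in>P j. E v u}" by auto
      then have "card {u\<in>P j. \<not> E v u} = card (P j) - card {u\<in>P j. E v u}"
        using finP[OF ij(2)] by (simp add: card_Diff_subset)
      then show "card {u\<in>P j. \<not> E v u} \<le> m"
        using degE[OF ij] cardP ij(2) by (simp add: m_def)
    qed
    have mq: "m * q \<le> p * n"
    proof -
      have "real m \<le> real p / real q * real n"
      proof (cases "\<delta> \<le> n")
        case True
        then have "real m = real n - real \<delta>" by (simp add: m_def of_nat_diff)
        also have "\<dots> \<le> b / h * real n" using dlt by (simp add: \<delta>_def h_def algebra_simps)
        finally show ?thesis by (simp add: bhpq)
      next
        case False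
        then show ?thesis by (simp add: m_def)
      qed
      then have "real m * real q \<le> real p * real n" using q0 by (simp add: field_simps)
      then have "real (m * q) \<le> real (p * n)" by simp
      then show ?thesis by (simp only: of_nat_le_iff)
    qed
    have pqh: "real p * (a + (real r - 1) * b) = b * real q" using pq by (simp add: h_def)
    from farkas[OF finV finI, of "wchar a b" "\<lambda>_. 1"] show ?thesis
    proof
      assume "\<exists>l. (\<forall>i\<in>I. 0 \<le> l i) \<and> (\<forall>v\<in>Vs. (\<Sum>i\<in>I. l i * wchar a b i v) = 1)"
      then show ?thesis unfolding perfect_weighted_fractional_tiling_def I_def by blast
    next
      assume "\<exists>y. (\<forall>i\<in>I. 0 \<le> (\<Sum>v\<in>Vs. y v * wchar a b i v)) \<and> (\<Sum>v\<in>Vs. y v * 1) < 0"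
      then obtain y where y: "\<forall>i\<in>I. 0 \<le> (\<Sum>v\<in>Vs. y v * wchar a b i v)" "(\<Sum>v\<in>Vs. y v) < 0" by auto
      obtain K where K: "K \<in> I" "(\<Sum>v\<in>Vs. y v * wchar a b K v) \<le> h / (real r * real n) * (\<Sum>v\<in>Vs. y v)"
        using dual[of r n Vs E P m a b p q y] r3 n0 bal deg a0 ab pqh p0 qp mq
        unfolding I_def h_def by auto
      have "h / (real r * real n) > 0" using hpos n0 r3 by simp
      then have "h / (real r * real n) * (\<Sum>v\<in>Vs. y v) < 0" using y(2) by (rule mult_pos_neg)
      then show ?thesis using K y(1) by fastforce
    qed
  qed
qed

end
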